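(* The Kelvin circulation theorem for the current alone is given by, \begin{align} \frac{d}{dt}\oint_{c(\mathbf{\widehat v})} \mathbf{\widehat{v}}\cdot d\mathbf{r} = - \oint_{c(\mathbf{\widehat v})} \frac{1}{\rho}dp - d \frac{|\mathbf{\widehat{v}}|^2}{2} \,. \end{align}
   Context: Setting: a 2D free surface model in which the horizontal current velocity $\mathbf{\widehat v}(\mathbf{r},t)$ transports a vertical wave elevation $\zeta(\mathbf{r},t)$ with vertical velocity $\widehat{w} = \partial_t\zeta + \mathbf{\widehat{v}}\cdot\nabla_{\mathbf{r}}\zeta$, derived from Hamilton's principle with Lagrangian $\ell=\int_{\cal D}\Big( \tfrac{1}{2}\big( |\mathbf{\widehat{v}}|^2 + \sigma^2\widehat w^2 \big) - \tfrac{\rho_{ref}}{\rho} \tfrac{\zeta^2}{2Fr^2} \Big) D\rho - p(D-1)\,d^2r$, with constants $\sigma^2, Fr^2,\rho_{ref}$, advected areal density $D\,d^2r$ and buoyancy $\rho$, and pressure $p$ enforcing $D=1$ ($\mathrm{div}\,\mathbf{\widehat v}=0$). The full Kelvin theorem for this model reads $\frac{d}{dt}\oint_{c(\mathbf{\widehat v})} ( \mathbf{\widehat{v}}\cdot d\mathbf{r} + \sigma^2\widehat{w}\,d\zeta) = \oint_{c(\mathbf{\widehat v})} -\rho^{-1} d\widetilde p + d\widetilde\varpi$ with $\widetilde p = p+\rho_{ref}\zeta^2/(2Fr^2)$, $\widetilde\varpi=\tfrac12(|\mathbf{\widehat v}|^2+\sigma^2\widehat w^2)$, and the wave equations $(\partial_t+\mathbf{\widehat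 v}\cdot\nabla)\widehat w = -\rho_{ref}\zeta/(\sigma^2Fr^2\rho)$, $(\partial_t+\mathbf{\widehat v}\cdot\nabla)\zeta=\widehat w$. The loop $c(\mathbf{\widehat v})$ moves with the horizontal flow. *)

theory Defs
  imports "HOL-Analysis.Analysis"
begin

fun Ck :: "nat \<Rightarrow> ('a::real_normed_vector \<Rightarrow> 'b::real_normed_vector) \<Rightarrow> bool" where
  "Ck 0 f = continuous_on UNIV f"
| "Ck (Suc k) f = ((\<forall>x. f differentiable (at x)) \<and>
                   (\<forall>h. Ck k (\<lambda>x. frechet_derivative f (at x) h)))"

definition smooth :: "('a::real_normed_vector \<Rightarrow> 'b::real_normed_vector) \<Rightarrow> bool" where
  "smooth f \<longleftrightarrow> (\<forall>k. Ck k f)"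

text \<open>The loop c(v) at time t: the initial closed loop c (parametrised on [0,1])
  transported by the Lagrangian flow map phi of the horizontal velocity.\<close>
definition loop_at :: "(real \<Rightarrow> real^2 \<Rightarrow> real^2) \<Rightarrow> (real \<Rightarrow> real^2) \<Rightarrow> real \<Rightarrow> real \<Rightarrow> real^2" where
  "loop_at \<phi> c t = (\<lambda>s. \<phi> t (c s))"

definition oint_dr :: "(real^2 \<Rightarrow> real^2) \<Rightarrow> (real \<Rightarrow> real^2) \<Rightarrow> real" where
  "oint_dr u \<gamma> = integral {0..1} (\<lambda>s. u (\<gamma> s) \<bullet> vector_derivative \<gamma> (at s))"

definition oint_d :: "(real^2 \<Rightarrow> real) \<Rightarrow> (real^2 \<Rightarrow> real) \<Rightarrow> (real \<Rightarrow> real^2) \<Rightarrow> real" where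
  "oint_d f g \<gamma> = integral {0..1} (\<lambda>s. f (\<gamma> s) * deriv (\<lambda>u. g (\<gamma> u)) s)"

end

theory Submission imports Defs begin

lemma smooth_Ck1: "smooth F \<Longrightarrow> Ck (Suc 0) F"
  unfolding smooth_def by blast

lemma smooth_diff: "smooth F \<Longrightarrow> F differentiable (at x)"
  using smooth_Ck1[of F] by simp

lemma smooth_cont: "smooth F \<Longrightarrow> continuous_on UNIV F"
  unfolding smooth_def using Ck.simps(1) by blast

lemma smooth_dcont: "smooth F \<Longrightarrow> continuous_on UNIV (\<lambda>x. frechet_derivative F (at x) h)"
  using smooth_Ck1[of F] by simp

lemma fd_linear: "smooth F \<Longrightarrow> linear (frechet_derivative F (at x))"
  using smooth_diff[of F x] frechet_derivative_works has_derivative_linear by blast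

lemma fd_repr:
  fixes F :: "'a::euclidean_space \<Rightarrow> 'b::real_normed_vector"
  assumes "smooth F"
  shows "frechet_derivative F (at x) h = (\<Sum>i\<in>Basis. (h \<bullet> i) *\<^sub>R frechet_derivative F (at x) i)"
proof -
  have lin: "linear (frechet_derivative F (at x))" using fd_linear[OF assms] .
  have "frechet_derivative F (at x) h = frechet_derivative F (at x) (\<Sum>i\<in>Basis. (h \<bullet> i) *\<^sub>R i)"
    by (simp add: euclidean_representation)
  also have "\<dots> = (\<Sum>i\<in>Basis. (h \<bullet> i) *\<^sub>R frechet_derivative F (at x) i)"
    by (simp only: linear_sum[OF lin] linear_scale[OF lin] o_def)
  finally show ?thesis .
qed

lemma cont_deriv_comp:
  fixes F :: "'a::euclidean_space \<Rightarrow> 'b::real_normed_vector"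
  assumes F: "smooth F" and a: "continuous_on S a" and b: "continuous_on S b"
  shows "continuous_on S (\<lambda>y. frechet_derivative F (at (a y)) (b y))"
proof -
  have "continuous_on S (\<lambda>y. (\<Sum>i\<in>Basis. (b y \<bullet> i) *\<^sub>R frechet_derivative F (at (a y)) i))"
  proof (intro continuous_intros b)
    fix i :: 'a
    show "continuous_on S (\<lambda>y. frechet_derivative F (at (a y)) i)"
      using continuous_on_compose2[OF smooth_dcont[OF F, of i] a] by simp
  qed
  then show ?thesis by (subst fd_repr[OF F]) 
qed

lemma chain_vd:
  fixes F :: "'a::euclidean_space \<Rightarrow> 'b::real_normed_vector"
  assumes F: "smooth F" and q: "(q has_vector_derivative q') (at u)"
  shows "((\<lambda>u. F (q u)) has_vector_derivative frechet_derivative F (at (q u)) q') (at u)"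
proof -
  have D: "(F has_derivative frechet_derivative F (at (q u))) (at (q u))"
    by (rule iffD1[OF frechet_derivative_works smooth_diff[OF F]])
  have "((F \<circ> q) has_vector_derivative frechet_derivative F (at (q u)) q') (at u)"
    by (rule vector_derivative_diff_chain_within[OF q has_derivative_at_withinI[OF D]])
  then show ?thesis unfolding o_def .
qed

lemma curve_vd:
  fixes c :: "real \<Rightarrow> 'a::real_normed_vector"
  assumes "smooth c"
  shows "(c has_vector_derivative frechet_derivative c (at u) 1) (at u)"
proof -
  have d: "c differentiable (at u)" using smooth_diff[OF assms] .
  have "frechet_derivative c (at u) 1 = vector_derivative c (at u)"
    using frechet_derivative_eq_vector_derivative[OF d] by simp
  then show ?thesis using vector_derivative_works d by metis
qed


lemma cUNIV: "continuous_on UNIV g \<Longrightarrow> continuous_on S f \<Longrightarrow> continuous_on S (\<lambda>x. g (f x))"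
  by (rule continuous_on_compose2) auto

lemma comp_vd:
  fixes F :: "real \<times> (real^2) \<Rightarrow> 'b::real_normed_vector" and \<phi> :: "real \<Rightarrow> real^2 \<Rightarrow> real^2"
    and c :: "real \<Rightarrow> real^2"
  assumes F: "smooth F" and P: "smooth (\<lambda>(t,x). \<phi> t x)" and c: "smooth c"
  shows "((\<lambda>u. F (s, \<phi> s (c u))) has_vector_derivative
     frechet_derivative F (at (s, \<phi> s (c u)))
       (0, frechet_derivative (\<lambda>(t,x). \<phi> t x) (at (s, c u)) (0, frechet_derivative c (at u) 1))) (at u)"
proof -
  have 1: "((\<lambda>u. (s, c u)) has_vector_derivative (0, frechet_derivative c (at u) 1)) (at u)"
    by (intro has_vector_derivative_Pair has_vector_derivative_const curve_vd[OF c])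
  have 2: "((\<lambda>u. (\<lambda>(t,x). \<phi> t x) (s, c u)) has_vector_derivative
      frechet_derivative (\<lambda>(t,x). \<phi> t x) (at (s, c u)) (0, frechet_derivative c (at u) 1)) (at u)"
    using chain_vd[OF P 1] by simp
  have 3: "((\<lambda>u. (s, \<phi> s (c u))) has_vector_derivative
      (0, frechet_derivative (\<lambda>(t,x). \<phi> t x) (at (s, c u)) (0, frechet_derivative c (at u) 1))) (at u)"
    using 2 by (intro has_vector_derivative_Pair has_vector_derivative_const) simp
  show ?thesis using chain_vd[OF F 3] by simp
qed

lemma comp_cont0:
  fixes F :: "real \<times> (real^2) \<Rightarrow> 'b::real_normed_vector" and \<phi> :: "real \<Rightarrow> real^2 \<Rightarrow> real^2"
    and c :: "real \<Rightarrow> real^2"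
  assumes F: "smooth F" and P: "smooth (\<lambda>(t,x). \<phi> t x)" and c: "smooth c"
  shows "continuous_on S (\<lambda>y. F (fst y, \<phi> (fst y) (c (snd y))))"
proof -
  have a: "continuous_on S (\<lambda>y. (fst y, c (snd y)))"
    by (intro continuous_intros cUNIV[OF smooth_cont[OF c]])
  have "continuous_on S (\<lambda>y. (\<lambda>(t,x). \<phi> t x) (fst y, c (snd y)))"
    by (rule cUNIV[OF smooth_cont[OF P] a])
  then have "continuous_on S (\<lambda>y. (fst y, \<phi> (fst y) (c (snd y))))"
    by (intro continuous_intros) simp
  from cUNIV[OF smooth_cont[OF F] this] show ?thesis .
qed

lemma comp_cont:
  fixes F :: "real \<times> (real^2) \<Rightarrow> 'b::real_normed_vector" and \<phi> :: "real \<Rightarrow> real^2 \<Rightarrow> real^2"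
    and c :: "real \<Rightarrow> real^2"
  assumes F: "smooth F" and P: "smooth (\<lambda>(t,x). \<phi> t x)" and c: "smooth c"
  shows "continuous_on S (\<lambda>y. frechet_derivative F (at (fst y, \<phi> (fst y) (c (snd y))))
       (0, frechet_derivative (\<lambda>(t,x). \<phi> t x) (at (fst y, c (snd y))) (0, frechet_derivative c (at (snd y)) 1)))"
proof -
  have a: "continuous_on S (\<lambda>y. (fst y, c (snd y)))"
    by (intro continuous_intros cUNIV[OF smooth_cont[OF c]])
  have "continuous_on S (\<lambda>y. (\<lambda>(t,x). \<phi> t x) (fst y, c (snd y)))"
    by (rule cUNIV[OF smooth_cont[OF P] a])
  then have a2: "continuous_on S (\<lambda>y. (fst y, \<phi> (fst y) (c (snd y))))"
    by (intro continuous_intros) simp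
  have b0: "continuous_on S (\<lambda>y. (0::real, frechet_derivative c (at (snd y)) 1))"
    by (intro continuous_intros cUNIV[OF smooth_dcont[OF c]])
  have b: "continuous_on S (\<lambda>y. (0::real, frechet_derivative (\<lambda>(t,x). \<phi> t x) (at (fst y, c (snd y))) (0, frechet_derivative c (at (snd y)) 1)))"
    by (intro continuous_intros cont_deriv_comp[OF P a b0])
  show ?thesis by (rule cont_deriv_comp[OF F a2 b])
qed


lemma cont_sec2:
  assumes "continuous_on UNIV (\<lambda>y. f (fst y) (snd y))"
  shows "continuous_on S (\<lambda>u. f s u)"
proof -
  have "continuous_on S (\<lambda>u. (s, u))" by (intro continuous_intros)
  from cUNIV[OF assms this] show ?thesis by simp
qed

lemma cont_sec1:
  assumes "continuous_on UNIV (\<lambda>y. f (fst y) (snd y))"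
  shows "continuous_on S (\<lambda>s. f s u)"
proof -
  have "continuous_on S (\<lambda>s. (s, u))" by (intro continuous_intros)
  from cUNIV[OF assms this] show ?thesis by simp
qed

lemma cont_swap:
  assumes "continuous_on UNIV (\<lambda>y. f (fst y) (snd y))"
  shows "continuous_on S (\<lambda>(x, r). f r x)"
proof -
  have "continuous_on S (\<lambda>y. (snd y, fst y))" by (intro continuous_intros)
  from cUNIV[OF assms this] show ?thesis by (simp add: split_beta)
qed

lemma cont_pair:
  assumes "continuous_on UNIV (\<lambda>y. f (fst y) (snd y))"
  shows "continuous_on S (\<lambda>(x, r). f x r)"
  using continuous_on_subset[OF assms] by (simp add: split_beta)

lemma closed_zero:
  fixes h :: "real \<Rightarrow> real"
  assumes "\<And>u. (h has_real_derivative h' u) (at u)" "h 0 = h 1"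
  shows "integral {0..1} h' = 0"
proof -
  have "(h' has_integral (h 1 - h 0)) {0..1}"
    by (rule fundamental_theorem_of_calculus)
       (auto simp: has_real_derivative_iff_has_vector_derivative[symmetric]
             intro: has_field_derivative_at_within assms(1))
  then show ?thesis using assms(2) by (simp add: integral_unique)
qed

lemma oint1_zero:
  assumes "\<And>u. (\<lambda>u. g (\<gamma> u)) differentiable (at u)" "\<gamma> 0 = \<gamma> 1"
  shows "oint_d (\<lambda>x. 1) g \<gamma> = 0"
proof -
  have "\<And>u. ((\<lambda>u. g (\<gamma> u)) has_real_derivative deriv (\<lambda>u. g (\<gamma> u)) u) (at u)"
    using assms(1) DERIV_deriv_iff_real_differentiable by blast
  from closed_zero[OF this] assms(2) show ?thesis by (simp add: oint_d_def)
qed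

lemma lin2:
  fixes f g :: "real \<Rightarrow> real"
  assumes "f integrable_on S" "g integrable_on S"
  shows "integral S (\<lambda>x. a * f x + b * g x) = a * integral S f + b * integral S g"
proof -
  have "((\<lambda>x. a * f x + b * g x) has_integral (a * integral S f + b * integral S g)) S"
    by (intro has_integral_add has_integral_mult_right integrable_integral assms)
  then show ?thesis by (rule integral_unique)
qed

theorem mainTheorem2:
  fixes v :: "real \<Rightarrow> real^2 \<Rightarrow> real^2"
    and \<zeta> w \<rho> p :: "real \<Rightarrow> real^2 \<Rightarrow> real"
    and \<phi> :: "real \<Rightarrow> real^2 \<Rightarrow> real^2"
    and \<sigma> Fr \<rho>ref :: real
    and c :: "real \<Rightarrow> real^2"
    and t :: real
  assumes sigma: "\<sigma> \<noteq> 0" and Fr: "Fr \<noteq> 0"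
    and sm_v: "smooth (\<lambda>(t, x). v t x)"
    and sm_zeta: "smooth (\<lambda>(t, x). \<zeta> t x)"
    and sm_w: "smooth (\<lambda>(t, x). w t x)"
    and sm_rho: "smooth (\<lambda>(t, x). \<rho> t x)"
    and sm_p: "smooth (\<lambda>(t, x). p t x)"
    and sm_phi: "smooth (\<lambda>(t, x). \<phi> t x)"
    and rho_pos: "\<And>t x. \<rho> t x > 0"
    and flow0: "\<And>X. \<phi> 0 X = X"
    and flow: "\<And>t X. ((\<lambda>s. \<phi> s X) has_vector_derivative v t (\<phi> t X)) (at t)"
    and wave_w: "\<And>t X. ((\<lambda>s. w s (\<phi> s X)) has_real_derivative
                   (- \<rho>ref * \<zeta> t (\<phi> t X) / (\<sigma>^2 * Fr^2 * \<rho> t (\<phi> t X)))) (at t)"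
    and wave_zeta: "\<And>t X. ((\<lambda>s. \<zeta> s (\<phi> s X)) has_real_derivative w t (\<phi> t X)) (at t)"
    and full_kelvin: "\<And>c' t'. smooth c' \<Longrightarrow> c' 0 = c' 1 \<Longrightarrow>
         ((\<lambda>s. oint_dr (v s) (loop_at \<phi> c' s)
                + oint_d (\<lambda>x. \<sigma>^2 * w s x) (\<zeta> s) (loop_at \<phi> c' s))
          has_real_derivative
            (oint_d (\<lambda>x. - 1 / \<rho> t' x) (\<lambda>x. p t' x + \<rho>ref * (\<zeta> t' x)^2 / (2 * Fr^2))
                    (loop_at \<phi> c' t')
             + oint_d (\<lambda>x. 1) (\<lambda>x. ((norm (v t' x))^2 + \<sigma>^2 * (w t' x)^2) / 2)
                    (loop_at \<phi> c' t'))) (at t')"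
    and c_smooth: "smooth c" and c_closed: "c 0 = c 1"
  shows "((\<lambda>s. oint_dr (v s) (loop_at \<phi> c s)) has_real_derivative
           - (oint_d (\<lambda>x. 1 / \<rho> t x) (p t) (loop_at \<phi> c t)
              - oint_d (\<lambda>x. 1) (\<lambda>x. (norm (v t x))^2 / 2) (loop_at \<phi> c t))) (at t)"
proof -
  define c' where "c' u = frechet_derivative c (at u) 1" for u
  define q where "q s u = (0::real, frechet_derivative (\<lambda>(t,x). \<phi> t x) (at (s, c u)) (0::real, c' u))" for s u
  define Z where "Z s u = \<zeta> s (\<phi> s (c u))" for s u
  define W where "W s u = w s (\<phi> s (c u))" for s u
  define R where "R s u = \<rho> s (\<phi> s (c u))" for s u
  define P where "P s u = p s (\<phi> s (c u))" for s u
  define DZ where "DZ s u = frechet_derivative (\<lambda>(t,x). \<zeta> t x) (at (s, \<phi> s (c u))) (q s u)" for s u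
  define DW where "DW s u = frechet_derivative (\<lambda>(t,x). w t x) (at (s, \<phi> s (c u))) (q s u)" for s u
  define DP where "DP s u = frechet_derivative (\<lambda>(t,x). p t x) (at (s, \<phi> s (c u))) (q s u)" for s u
  have dZ: "((\<lambda>u. Z s u) has_real_derivative DZ s u) (at u)" for s u
    using comp_vd[OF sm_zeta sm_phi c_smooth, of s u]
    unfolding has_real_derivative_iff_has_vector_derivative Z_def DZ_def q_def c'_def by simp
  have dW: "((\<lambda>u. W s u) has_real_derivative DW s u) (at u)" for s u
    using comp_vd[OF sm_w sm_phi c_smooth, of s u]
    unfolding has_real_derivative_iff_has_vector_derivative W_def DW_def q_def c'_def by simp
  have dP: "((\<lambda>u. P s u) has_real_derivative DP s u) (at u)" for s u
    using comp_vd[OF sm_p sm_phi c_smooth, of s u]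
    unfolding has_real_derivative_iff_has_vector_derivative P_def DP_def q_def c'_def by simp
  have cDZ: "continuous_on UNIV (\<lambda>y. DZ (fst y) (snd y))"
    using comp_cont[OF sm_zeta sm_phi c_smooth] unfolding DZ_def q_def c'_def .
  have cDW: "continuous_on UNIV (\<lambda>y. DW (fst y) (snd y))"
    using comp_cont[OF sm_w sm_phi c_smooth] unfolding DW_def q_def c'_def .
  have cDP: "continuous_on UNIV (\<lambda>y. DP (fst y) (snd y))"
    using comp_cont[OF sm_p sm_phi c_smooth] unfolding DP_def q_def c'_def .
  have cZ: "continuous_on UNIV (\<lambda>y. Z (fst y) (snd y))"
    using comp_cont0[OF sm_zeta sm_phi c_smooth] unfolding Z_def by simp
  have cW: "continuous_on UNIV (\<lambda>y. W (fst y) (snd y))"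
    using comp_cont0[OF sm_w sm_phi c_smooth] unfolding W_def by simp
  have cR: "continuous_on UNIV (\<lambda>y. R (fst y) (snd y))"
    using comp_cont0[OF sm_rho sm_phi c_smooth] unfolding R_def by simp
  have Rpos: "R s u > 0" for s u unfolding R_def by (rule rho_pos)
  have Rne: "R s u \<noteq> 0" for s u using Rpos[of s u] by simp
  have dWs: "((\<lambda>s. W s u) has_real_derivative (- \<rho>ref * Z s u / (\<sigma>^2 * Fr^2 * R s u))) (at s)" for s u
    using wave_w[where t=s and X="c u"] unfolding W_def Z_def R_def .
  have dZs: "((\<lambda>s. Z s u) has_real_derivative W s u) (at s)" for s u
    using wave_zeta[where t=s and X="c u"] unfolding W_def Z_def .
  define a where "a = t - 2"
  define b where "b = t + 2"
  have MP: "((\<lambda>s. DZ s u) has_real_derivative DW s u) (at s)" if s_in0: "s \<in> {t-1<..<t+1}" for s u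
  proof -
    have I: "Z s' u' - Z a u' = integral {a..s'} (\<lambda>r. W r u')" if "a \<le> s'" for s' u'
    proof -
      have "((\<lambda>r. W r u') has_integral (Z s' u' - Z a u')) {a..s'}"
        by (rule fundamental_theorem_of_calculus[OF that])
           (auto simp: has_real_derivative_iff_has_vector_derivative[symmetric]
             intro: has_field_derivative_at_within dZs)
      then show ?thesis by (simp add: integral_unique)
    qed
    have L: "((\<lambda>u'. integral {a..s'} (\<lambda>r. W r u')) has_real_derivative integral {a..s'} (\<lambda>r. DW r u')) (at u')" for s' u'
    proof -
      have "((\<lambda>u'. integral (cbox a s') (\<lambda>r. W r u')) has_field_derivative integral (cbox a s') (\<lambda>r. DW r u')) (at u' within UNIV)"
      proof (rule leibniz_rule_field_derivative[where fx="\<lambda>x r. DW r x"])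
        show "((\<lambda>x. W r x) has_field_derivative DW r x) (at x within UNIV)" for x r
          by (rule dW)
        show "(\<lambda>r. W r x) integrable_on cbox a s'" for x
          by (rule integrable_continuous) (rule cont_sec1[OF cW])
        show "continuous_on (UNIV \<times> cbox a s') (\<lambda>(x, r). DW r x)"
          by (rule cont_swap[OF cDW])
      qed auto
      then show ?thesis by simp
    qed
    have E: "DZ s' u - DZ a u = integral {a..s'} (\<lambda>r. DW r u)" if "a \<le> s'" for s'
    proof -
      have "((\<lambda>u'. Z s' u' - Z a u') has_real_derivative DZ s' u - DZ a u) (at u)"
        by (intro DERIV_diff dZ)
      moreover have "(\<lambda>u'. Z s' u' - Z a u') = (\<lambda>u'. integral {a..s'} (\<lambda>r. W r u'))"
        using I[OF that] by auto
      ultimately have "((\<lambda>u'. integral {a..s'} (\<lambda>r. W r u')) has_real_derivative DZ s' u - DZ a u) (at u)"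
        by simp
      from DERIV_unique[OF this L] show ?thesis .
    qed
    have s_in: "s \<in> {a<..<b}" using s_in0 a_def b_def by auto
    have "((\<lambda>s'. integral {a..s'} (\<lambda>r. DW r u)) has_real_derivative DW s u) (at s within {a..b})"
      by (rule integral_has_real_derivative) (use cont_sec1[OF cDW] s_in in auto)
    then have "((\<lambda>s'. integral {a..s'} (\<lambda>r. DW r u)) has_real_derivative DW s u) (at s)"
      using at_within_interior[of s "{a..b}"] s_in by simp
    from DERIV_add[OF DERIV_const[of "DZ a u"] this]
    have "((\<lambda>s'. DZ a u + integral {a..s'} (\<lambda>r. DW r u)) has_real_derivative DW s u) (at s)"
      by simp
    then show ?thesis
    proof (rule has_field_derivative_transform_within_open[where S="{a<..<b}"])
      show "open {a<..<b}" by simp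
      show "s \<in> {a<..<b}" by (rule s_in)
      fix x assume "x \<in> {a<..<b}"
      then have "a \<le> x" by simp
      from E[OF this] show "DZ a u + integral {a..x} (\<lambda>r. DW r u) = DZ x u" by simp
    qed
  qed
  define G where "G s = integral {0..1} (\<lambda>u. W s u * DZ s u)" for s
  define fx where "fx s u = (- \<rho>ref * Z s u / (\<sigma>^2 * Fr^2 * R s u)) * DZ s u + W s u * DW s u" for s u
  have cfx0: "continuous_on UNIV (\<lambda>y. fx (fst y) (snd y))"
    unfolding fx_def
    by (intro continuous_on_add continuous_on_mult continuous_on_divide continuous_on_const cZ cR cDZ cW cDW)
       (simp add: Rne sigma Fr)
  have G': "(G has_real_derivative integral {0..1} (fx t)) (at t)"
  proof -
    have "((\<lambda>s. integral (cbox 0 1) (\<lambda>u. W s u * DZ s u)) has_field_derivative integral (cbox 0 1) (fx t)) (at t within {t-1<..<t+1})"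
    proof (rule leibniz_rule_field_derivative[where fx=fx and f="\<lambda>s u. W s u * DZ s u"])
      fix s u assume s: "s \<in> {t-1<..<t+1}" and "u \<in> cbox 0 (1::real)"
      have "((\<lambda>s. W s u * DZ s u) has_real_derivative fx s u) (at s)"
        using DERIV_mult[OF dWs MP[OF s]] by (simp add: fx_def algebra_simps)
      then show "((\<lambda>s. W s u * DZ s u) has_field_derivative fx s u) (at s within {t-1<..<t+1})"
        by (rule has_field_derivative_at_within)
    next
      fix s
      show "(\<lambda>u. W s u * DZ s u) integrable_on cbox 0 1"
        by (intro integrable_continuous continuous_on_mult cont_sec2[OF cW] cont_sec2[OF cDZ])
    next
      show "continuous_on ({t-1<..<t+1} \<times> cbox 0 1) (\<lambda>(s, u). fx s u)"
        by (rule cont_pair[OF cfx0])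
    qed auto
    then show ?thesis unfolding G_def using at_within_open[of t "{t-1<..<t+1}"] by simp
  qed
  have wave_eq: "oint_d (\<lambda>x. \<sigma>^2 * w s x) (\<zeta> s) (loop_at \<phi> c s) = \<sigma>^2 * G s" for s
  proof -
    have "deriv (\<lambda>u. \<zeta> s (\<phi> s (c u))) u = DZ s u" for u
      using DERIV_imp_deriv[OF dZ[of s u]] by (simp add: Z_def)
    then show ?thesis by (simp add: oint_d_def G_def loop_at_def W_def mult.assoc)
  qed
  define Kd where "Kd = oint_d (\<lambda>x. - 1 / \<rho> t x) (\<lambda>x. p t x + \<rho>ref * (\<zeta> t x)^2 / (2 * Fr^2))
                    (loop_at \<phi> c t)
             + oint_d (\<lambda>x. 1) (\<lambda>x. ((norm (v t x))^2 + \<sigma>^2 * (w t x)^2) / 2)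
                    (loop_at \<phi> c t)"
  define K where "K s = oint_dr (v s) (loop_at \<phi> c s)
                + oint_d (\<lambda>x. \<sigma>^2 * w s x) (\<zeta> s) (loop_at \<phi> c s)" for s
  have dK: "(K has_real_derivative Kd) (at t)"
    using full_kelvin[OF c_smooth c_closed, of t] unfolding K_def Kd_def .
  have feq: "(\<lambda>s. oint_dr (v s) (loop_at \<phi> c s)) = (\<lambda>s. K s - \<sigma>^2 * G s)"
    by (auto simp: K_def wave_eq)
  have dC: "((\<lambda>s. K s - \<sigma>^2 * G s) has_real_derivative Kd - \<sigma>^2 * integral {0..1} (fx t)) (at t)"
    by (intro DERIV_diff DERIV_cmult dK G')
  have final: "Kd - \<sigma>^2 * integral {0..1} (fx t) =
      - (oint_d (\<lambda>x. 1 / \<rho> t x) (p t) (loop_at \<phi> c t)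
              - oint_d (\<lambda>x. 1) (\<lambda>x. (norm (v t x))^2 / 2) (loop_at \<phi> c t))"
  proof -
    let ?g = "loop_at \<phi> c t"
    have g: "?g u = \<phi> t (c u)" for u by (simp add: loop_at_def)
    have cl: "?g 0 = ?g 1" by (simp add: loop_at_def c_closed)
    have Vd: "(\<lambda>u. v t (?g u)) differentiable (at u)" for u
    proof -
      from comp_vd[OF sm_v sm_phi c_smooth, of t u]
      have "(\<lambda>u. (\<lambda>(t,x). v t x) (t, \<phi> t (c u))) differentiable (at u)"
        by (rule differentiableI_vector)
      then show ?thesis unfolding g by simp
    qed
    have NV: "(\<lambda>u. (norm (v t (?g u)))^2) differentiable (at u)" for u
      unfolding power2_norm_eq_inner using differentiable_inner[OF Vd Vd] .
    have Wd: "(\<lambda>u. w t (?g u)) differentiable (at u)" for u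
      using dW[of t u] unfolding real_differentiable_def W_def g by blast
    have B1: "oint_d (\<lambda>x. 1) (\<lambda>x. ((norm (v t x))^2 + \<sigma>^2 * (w t x)^2) / 2) ?g = 0"
      by (rule oint1_zero[OF _ cl]) (intro differentiable_divide differentiable_add differentiable_mult differentiable_const differentiable_power NV Wd, simp)
    have B2: "oint_d (\<lambda>x. 1) (\<lambda>x. (norm (v t x))^2 / 2) ?g = 0"
      by (rule oint1_zero[OF _ cl]) (intro differentiable_divide differentiable_const NV, simp)
    have dd: "deriv (\<lambda>u. p t (?g u) + \<rho>ref * (\<zeta> t (?g u))^2 / (2 * Fr^2)) u
            = DP t u + \<rho>ref * Z t u * DZ t u / Fr^2" for u
    proof -
      have "((\<lambda>u. P t u + \<rho>ref * (Z t u)^2 / (2 * Fr^2)) has_real_derivative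
               DP t u + \<rho>ref * (2 * Z t u * DZ t u) / (2 * Fr^2)) (at u)"
      proof -
        have d1: "((\<lambda>u. (Z t u)^2) has_real_derivative 2 * Z t u * DZ t u) (at u)"
          using DERIV_power[OF dZ[of t u], of 2] by (simp add: mult.commute mult.left_commute)
        have d2: "((\<lambda>u. \<rho>ref * (Z t u)^2 / (2 * Fr^2)) has_real_derivative \<rho>ref * (2 * Z t u * DZ t u) / (2 * Fr^2)) (at u)"
          by (rule DERIV_cdivide[OF DERIV_cmult[OF d1]])
        show ?thesis using DERIV_add[OF dP[of t u] d2] by simp
      qed
      then show ?thesis using Fr unfolding g P_def Z_def
        by (simp add: DERIV_imp_deriv)
    qed
    define I1 where "I1 = integral {0..1} (\<lambda>u. DP t u / R t u)"
    define I2 where "I2 = integral {0..1} (\<lambda>u. Z t u * DZ t u / R t u)"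
    have int1: "(\<lambda>u. DP t u / R t u) integrable_on {0..1}"
      by (intro integrable_continuous_real continuous_on_divide cont_sec2[OF cDP] cont_sec2[OF cR]) (simp add: Rne)
    have int2: "(\<lambda>u. Z t u * DZ t u / R t u) integrable_on {0..1}"
      by (intro integrable_continuous_real continuous_on_divide continuous_on_mult cont_sec2[OF cZ] cont_sec2[OF cDZ] cont_sec2[OF cR]) (simp add: Rne)
    have int3: "(\<lambda>u. W t u * DW t u) integrable_on {0..1}"
      by (intro integrable_continuous_real continuous_on_mult cont_sec2[OF cW] cont_sec2[OF cDW])
    have WW: "integral {0..1} (\<lambda>u. W t u * DW t u) = 0"
    proof (rule closed_zero[where h="\<lambda>u. (W t u)^2 / 2"])
      show "((\<lambda>u. (W t u)^2 / 2) has_real_derivative W t u * DW t u) (at u)" for u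
        using DERIV_divide[OF DERIV_power[OF dW[of t u], of 2] DERIV_const[of 2]]
        by (simp add: mult.commute)
      show "(W t 0)^2 / 2 = (W t 1)^2 / 2" by (simp add: W_def c_closed)
    qed
    have A1: "oint_d (\<lambda>x. - 1 / \<rho> t x) (\<lambda>x. p t x + \<rho>ref * (\<zeta> t x)^2 / (2 * Fr^2)) ?g
          = (- \<rho>ref / Fr^2) * I2 + (-1) * I1"
    proof -
      have "oint_d (\<lambda>x. - 1 / \<rho> t x) (\<lambda>x. p t x + \<rho>ref * (\<zeta> t x)^2 / (2 * Fr^2)) ?g
          = integral {0..1} (\<lambda>u. (- \<rho>ref / Fr^2) * (Z t u * DZ t u / R t u) + (-1) * (DP t u / R t u))"
        unfolding oint_d_def dd
        by (rule arg_cong[where f="integral {0..1}"], rule ext) (simp add: g R_def[symmetric] Rne Fr field_simps)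
      also have "\<dots> = (- \<rho>ref / Fr^2) * I2 + (-1) * I1"
        unfolding I1_def I2_def by (rule lin2[OF int2 int1])
      finally show ?thesis .
    qed
    have A2: "oint_d (\<lambda>x. 1 / \<rho> t x) (p t) ?g = I1"
    proof -
      have "deriv (\<lambda>u. p t (?g u)) u = DP t u" for u
        using DERIV_imp_deriv[OF dP[of t u]] unfolding g P_def .
      then show ?thesis unfolding oint_d_def I1_def by (simp add: g R_def)
    qed
    have GD: "integral {0..1} (fx t) = (- \<rho>ref / (\<sigma>^2 * Fr^2)) * I2 + 1 * 0"
    proof -
      have "integral {0..1} (fx t) = integral {0..1} (\<lambda>u. (- \<rho>ref / (\<sigma>^2 * Fr^2)) * (Z t u * DZ t u / R t u) + 1 * (W t u * DW t u))"
        by (rule arg_cong[where f="integral {0..1}"], rule ext) (simp add: fx_def Rne sigma Fr field_simps)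
      also have "\<dots> = (- \<rho>ref / (\<sigma>^2 * Fr^2)) * I2 + 1 * 0"
        unfolding I2_def lin2[OF int2 int3] WW ..
      finally show ?thesis .
    qed
    show ?thesis unfolding Kd_def A1 A2 B1 B2 GD using sigma Fr by (simp add: field_simps)
  qed
  show ?thesis using dC final feq by simp
qed

end
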